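(* If $G$ is a triangle-free graph of order $n$, then $q_n(G)<2n/9$, where $q_n(G)$ is the smallest eigenvalue of the signless Laplacian of $G$.
   Context: Graphs are finite and simple. For a graph $G$ with adjacency matrix $A$ and diagonal degree matrix $D$, the signless Laplacian is $Q(G)=D+A$; $q_n(G)$ is its smallest eigenvalue. *)

theory Defs
  imports "HOL-Analysis.Analysis"
begin

definition simple_graph :: "('n::finite \<Rightarrow> 'n \<Rightarrow> bool) \<Rightarrow> bool" where
  "simple_graph E \<longleftrightarrow> (\<forall>u v. E u v \<longrightarrow> E v u) \<and> (\<forall>v. \<not> E v v)"

definition triangle_free :: "('n::finite \<Rightarrow> 'n \<Rightarrow> bool) \<Rightarrow> bool" where
  "triangle_free E \<longleftrightarrow> \<not> (\<exists>u v w. E u v \<and> E v w \<and> E w u)"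

definition adjacency_matrix :: "('n::finite \<Rightarrow> 'n \<Rightarrow> bool) \<Rightarrow> real^'n^'n" where
  "adjacency_matrix E = (\<chi> i j. if E i j then 1 else 0)"

definition degree :: "('n::finite \<Rightarrow> 'n \<Rightarrow> bool) \<Rightarrow> 'n \<Rightarrow> nat" where
  "degree E v = card {u. E v u}"

definition degree_matrix :: "('n::finite \<Rightarrow> 'n \<Rightarrow> bool) \<Rightarrow> real^'n^'n" where
  "degree_matrix E = (\<chi> i j. if i = j then real (degree E i) else 0)"

definition signless_laplacian :: "('n::finite \<Rightarrow> 'n \<Rightarrow> bool) \<Rightarrow> real^'n^'n" where
  "signless_laplacian E = degree_matrix E + adjacency_matrix E"

definition eigenvalues :: "real^'n^'n \<Rightarrow> real set" where
  "eigenvalues M = {c. \<exists>v. v \<noteq> 0 \<and> M *v v = c *\<^sub>R v}"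

definition smallest_eigenvalue :: "real^'n^'n \<Rightarrow> real" where
  "smallest_eigenvalue M = Min (eigenvalues M)"

end

theory Submission imports Defs begin

lemma sym_dot:
  fixes M :: "real^'n^'n"
  assumes "transpose M = M"
  shows "x \<bullet> (M *v y) = (M *v x) \<bullet> y"
  using assms unfolding inner_vec_def matrix_vector_mult_def
  apply (simp add: sum_distrib_left sum_distrib_right)
  apply (subst sum.swap)
  apply (rule sum.cong[OF refl])+
  apply (metis (no_types, lifting) mult.commute mult.left_commute transpose_def vec_lambda_beta)
  done

lemma quad_scale:
  fixes M :: "real^'n^'n"
  shows "(c *\<^sub>R x) \<bullet> (M *v (c *\<^sub>R x)) = c^2 * (x \<bullet> (M *v x))"
  by (simp add: matrix_vector_mult_scaleR power2_eq_square)

lemma t1: "compact (sphere (0::real^'n) 1)" by (rule compact_sphere)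
lemma t2: "sphere (0::real^'n) 1 \<noteq> {}" by (simp add: sphere_eq_empty)
lemma t3: "continuous_on (sphere 0 1) (\<lambda>x::real^'n. x \<bullet> (M *v x))"
    by (intro continuous_on_inner continuous_on_id matrix_vector_mult_linear_continuous_on)
lemma min_rayleigh:
  fixes M :: "real^'n^'n"
  shows "\<exists>x0. norm x0 = 1 \<and> (\<forall>y. (x0 \<bullet> (M *v x0)) * (y \<bullet> y) \<le> y \<bullet> (M *v y))"
proof -
  obtain x0 where x0: "x0 \<in> sphere 0 1" and mn: "\<And>y. y \<in> sphere 0 1 \<Longrightarrow> x0 \<bullet> (M *v x0) \<le> y \<bullet> (M *v y)"
    using continuous_attains_inf[OF t1 t2 t3[of M]] by blast
  show ?thesis
  proof (intro exI conjI allI)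
    show "norm x0 = 1" using x0 by simp
    fix y :: "real^'n"
    show "(x0 \<bullet> (M *v x0)) * (y \<bullet> y) \<le> y \<bullet> (M *v y)"
    proof (cases "y = 0")
      case True then show ?thesis by simp
    next
      case False
      define z where "z = (1 / norm y) *\<^sub>R y"
      have "z \<in> sphere 0 1" using False by (simp add: z_def)
      then have "x0 \<bullet> (M *v x0) \<le> z \<bullet> (M *v z)" by (rule mn)
      also have "\<dots> = (1/norm y)^2 * (y \<bullet> (M *v y))" unfolding z_def by (rule quad_scale)
      finally have "x0 \<bullet> (M *v x0) * (norm y)^2 \<le> y \<bullet> (M *v y)"
        using False by (simp add: field_simps)
      then show ?thesis by (simp add: power2_norm_eq_inner)
    qed
  qed
qed


lemma min_eigen:
  fixes M :: "real^'n^'n"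
  assumes sym: "transpose M = M"
  shows "\<exists>m \<in> eigenvalues M. \<forall>y. m * (y \<bullet> y) \<le> y \<bullet> (M *v y)"
proof -
  obtain x0 where n1: "norm x0 = 1" and mn: "\<forall>y. (x0 \<bullet> (M *v x0)) * (y \<bullet> y) \<le> y \<bullet> (M *v y)"
    using min_rayleigh by blast
  define m where "m = x0 \<bullet> (M *v x0)"
  define q where "q y = y \<bullet> (M *v y) - m * (y \<bullet> y)" for y
  have qge: "q y \<ge> 0" for y using mn unfolding q_def m_def by auto
  have xx: "x0 \<bullet> x0 = 1" using n1 by (simp add: norm_eq_1)
  have q0: "q x0 = 0" unfolding q_def m_def using xx by simp
  define w where "w = M *v x0 - m *\<^sub>R x0"
  have ww: "w = 0"
  proof (rule ccontr)
    assume "w \<noteq> 0"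
    then have wpos: "w \<bullet> w > 0" by simp
    have sd: "x0 \<bullet> (M *v w) = w \<bullet> (M *v x0)"
      using sym_dot[OF sym, of x0 w] by (simp add: inner_commute)
    have expand: "q (x0 - t *\<^sub>R w) = q x0 - 2 * t * (w \<bullet> w) + t^2 * q w" for t
    proof -
      have h0: "w \<bullet> w = w \<bullet> (M *v x0 - m *\<^sub>R x0)"
        by (simp only: w_def[symmetric])
      have h: "w \<bullet> (M *v x0) = w \<bullet> w + m * (w \<bullet> x0)"
        using h0 by (simp add: inner_diff_right)
      show ?thesis
        unfolding q_def using sd
        by (simp add: matrix_vector_mult_diff_distrib matrix_vector_mult_scaleR inner_diff_left
            inner_diff_right inner_commute[of x0 w] power2_eq_square algebra_simps h)
    qed
    define t where "t = (w \<bullet> w) / (q w + 1)"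
    have tpos: "t > 0" unfolding t_def using wpos qge[of w] by simp
    have "t * q w < w \<bullet> w" unfolding t_def using wpos qge[of w]
      by (simp add: field_simps)
    then have "t^2 * q w < t * (w \<bullet> w)" using tpos by (simp add: power2_eq_square)
    moreover have "t * (w \<bullet> w) > 0" using tpos wpos by simp
    moreover have "2 * t * (w \<bullet> w) = 2 * (t * (w \<bullet> w))" by simp
    ultimately have "q (x0 - t *\<^sub>R w) < 0" using expand[of t] q0 by linarith
    then show False using qge[of "x0 - t *\<^sub>R w"] by linarith
  qed
  have "m \<in> eigenvalues M"
    unfolding eigenvalues_def using ww n1 unfolding w_def by (auto intro!: exI[of _ x0])
  moreover have "\<forall>y. m * (y \<bullet> y) \<le> y \<bullet> (M *v y)" using mn m_def by simp
  ultimately show ?thesis by blast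
qed

lemma eig_finite:
  fixes M :: "real^'n^'n"
  assumes sym: "transpose M = M"
  shows "finite (eigenvalues M)"
proof -
  define f where "f c = (SOME v. v \<noteq> 0 \<and> M *v v = c *\<^sub>R v)" for c
  have fP: "f c \<noteq> 0 \<and> M *v f c = c *\<^sub>R f c" if "c \<in> eigenvalues M" for c
  proof -
    from that obtain v where "v \<noteq> 0 \<and> M *v v = c *\<^sub>R v" unfolding eigenvalues_def by blast
    then show ?thesis unfolding f_def by (rule someI)
  qed
  have inj: "inj_on f (eigenvalues M)"
  proof (rule inj_onI)
    fix a b assume a: "a \<in> eigenvalues M" and b: "b \<in> eigenvalues M" and e: "f a = f b"
    have "a *\<^sub>R f a = b *\<^sub>R f a" using fP[OF a] fP[OF b] e by metis
    then show "a = b" using fP[OF a] by simp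
  qed
  have "pairwise orthogonal (f ` eigenvalues M)"
  proof (clarsimp simp: pairwise_def)
    fix a b assume a: "a \<in> eigenvalues M" and b: "b \<in> eigenvalues M" and ne: "f a \<noteq> f b"
    have "a \<noteq> b" using ne by auto
    have "f a \<bullet> (M *v f b) = (M *v f a) \<bullet> f b" by (rule sym_dot[OF sym])
    then have "b * (f a \<bullet> f b) = a * (f a \<bullet> f b)" using fP[OF a] fP[OF b] by simp
    then have "f a \<bullet> f b = 0" using \<open>a \<noteq> b\<close> by simp
    then show "orthogonal (f a) (f b)" by (simp add: orthogonal_def)
  qed
  moreover have "0 \<notin> f ` eigenvalues M" using fP by auto
  ultimately have "independent (f ` eigenvalues M)" by (rule pairwise_orthogonal_independent)
  then have "finite (f ` eigenvalues M)" by (rule independent_imp_finite)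
  then show ?thesis using inj finite_imageD by blast
qed


lemma main_graph:
  fixes E :: "'n::finite \<Rightarrow> 'n \<Rightarrow> bool"
  assumes sg: "simple_graph E" and tf: "triangle_free E"
  shows "\<exists>x::real^'n. x \<noteq> 0 \<and> x \<bullet> (signless_laplacian E *v x) < (2 * real CARD('n) / 9) * (x \<bullet> x)"
    and "transpose (signless_laplacian E) = signless_laplacian E"
proof -
  define Q where "Q = signless_laplacian E"
  define A where "A i j = (if E i j then 1 else (0::real))" for i j
  define d where "d i = real (degree E i)" for i
  define N where "N = real CARD('n)"
  have symE: "E i j = E j i" for i j using sg unfolding simple_graph_def by blast
  have symA: "A i j = A j i" for i j unfolding A_def using symE by simp
  have dsum: "d i = (\<Sum>j\<in>UNIV. A i j)" for i
    unfolding d_def A_def degree_def by (simp add: sum.If_cases)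
  have Qe: "Q $ i $ j = (if i = j then d i else 0) + A i j" for i j
    unfolding Q_def signless_laplacian_def degree_matrix_def adjacency_matrix_def d_def A_def by simp
  show "transpose (signless_laplacian E) = signless_laplacian E"
    unfolding Q_def[symmetric] by (simp add: vec_eq_iff transpose_def Qe symA)
  have quad: "x \<bullet> (Q *v x) = (\<Sum>i\<in>UNIV. \<Sum>j\<in>UNIV. A i j * ((x$i)^2 + x$i * x$j))" for x :: "real^'n"
  proof -
    have "x \<bullet> (Q *v x) = (\<Sum>i\<in>UNIV. x$i * (\<Sum>j\<in>UNIV. ((if i = j then d i else 0) + A i j) * x$j))"
      unfolding inner_vec_def matrix_vector_mult_def by (simp add: Qe)
    also have "\<dots> = (\<Sum>i\<in>UNIV. x$i * (d i * x$i + (\<Sum>j\<in>UNIV. A i j * x$j)))"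
    proof -
      have "((if i = j then d i else 0) + A i j) * x$j = (if i = j then d i * x$i else 0) + A i j * x$j" for i j
        by (auto simp: distrib_right)
      then show ?thesis by (simp add: sum.distrib)
    qed
    also have "\<dots> = (\<Sum>i\<in>UNIV. \<Sum>j\<in>UNIV. A i j * ((x$i)^2 + x$i * x$j))"
      by (simp add: dsum sum_distrib_left sum_distrib_right sum.distrib[symmetric] power2_eq_square algebra_simps)
    finally show ?thesis .
  qed
  define X where "X v = ((\<chi> i. 3 * A v i - 1) :: real^'n)" for v
  have tri: "\<not> (E i j \<and> E v i \<and> E v j)" for i j v
    using tf symE unfolding triangle_free_def by blast
  have pw: "A i j * (((X v)$i)^2 + (X v)$i * (X v)$j) = A i j * (2 - 3 * A v j)" for i j v
    using tri[of i j v] unfolding X_def A_def by (auto simp: power2_eq_square)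
  have num: "X v \<bullet> (Q *v X v) = (\<Sum>i\<in>UNIV. \<Sum>j\<in>UNIV. A i j * (2 - 3 * A v j))" for v
    unfolding quad pw ..
  have den: "X v \<bullet> X v = 3 * d v + N" for v
  proof -
    have "X v \<bullet> X v = (\<Sum>i\<in>UNIV. 3 * A v i + 1)"
      unfolding inner_vec_def X_def by (rule sum.cong) (auto simp: A_def)
    also have "\<dots> = 3 * d v + N" by (simp add: sum.distrib dsum sum_distrib_left N_def)
    finally show ?thesis .
  qed
  define S where "S = (\<Sum>j\<in>UNIV. d j)"
  define P where "P = (\<Sum>j\<in>UNIV. (d j)^2)"
  have sumnum: "(\<Sum>v\<in>UNIV. X v \<bullet> (Q *v X v)) = 2 * N * S - 3 * P"
  proof -
    have "(\<Sum>v\<in>UNIV. X v \<bullet> (Q *v X v)) = (\<Sum>v\<in>UNIV. \<Sum>i\<in>UNIV. \<Sum>j\<in>UNIV. A i j * (2 - 3 * A v j))"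
      unfolding num ..
    also have "\<dots> = (\<Sum>i\<in>UNIV. \<Sum>v\<in>UNIV. \<Sum>j\<in>UNIV. A i j * (2 - 3 * A v j))"
      by (rule sum.swap)
    also have "\<dots> = (\<Sum>i\<in>UNIV. \<Sum>j\<in>UNIV. \<Sum>v\<in>UNIV. A i j * (2 - 3 * A v j))"
      by (rule sum.cong[OF refl], rule sum.swap)
    also have "\<dots> = (\<Sum>i\<in>UNIV. \<Sum>j\<in>UNIV. A i j * (2 * N - 3 * d j))"
    proof -
      have "(\<Sum>v\<in>UNIV. A i j * (2 - 3 * A v j)) = A i j * (2 * N - 3 * d j)" for i j
        by (simp add: sum_distrib_left[symmetric] sum_subtractf sum_distrib_left dsum symA N_def algebra_simps)
      then show ?thesis by simp
    qed
    also have "\<dots> = (\<Sum>i\<in>UNIV. \<Sum>j\<in>UNIV. 2 * N * A i j - 3 * (A i j * d j))"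
      by (simp add: algebra_simps)
    also have "\<dots> = 2 * N * (\<Sum>i\<in>UNIV. \<Sum>j\<in>UNIV. A i j) - 3 * (\<Sum>i\<in>UNIV. \<Sum>j\<in>UNIV. A i j * d j)"
      by (simp add: sum_subtractf sum_distrib_left)
    also have "\<dots> = 2 * N * S - 3 * P"
    proof -
      have sw: "(\<Sum>i\<in>UNIV. \<Sum>j\<in>UNIV. A i j * d j) = (\<Sum>j\<in>UNIV. (\<Sum>i\<in>UNIV. A i j) * d j)"
        by (subst sum.swap) (simp add: sum_distrib_right)
      have c0: "(\<Sum>i\<in>UNIV. A i j) = d j" for j
        unfolding dsum by (rule sum.cong[OF refl]) (rule symA)
      have c1: "(\<Sum>i\<in>UNIV. \<Sum>j\<in>UNIV. A i j) = S"
        unfolding S_def dsum ..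
      show ?thesis unfolding sw c0 c1 P_def by (simp add: power2_eq_square)
    qed
    finally show ?thesis .
  qed
  show "\<exists>x::real^'n. x \<noteq> 0 \<and> x \<bullet> (signless_laplacian E *v x) < (2 * real CARD('n) / 9) * (x \<bullet> x)"
  proof -
    define c where "c = 2 * N / 9"
    have Npos: "N \<ge> 1" unfolding N_def by simp
    have dnn: "d v \<ge> 0" for v unfolding d_def by simp
    have sumden: "(\<Sum>v\<in>UNIV. X v \<bullet> X v) = 3 * S + N * N"
      by (simp add: den sum.distrib sum_distrib_left S_def N_def)
    have h1: "S^2 \<le> N * P"
      using sum_squared_le_sum_of_squares[of d UNIV] unfolding S_def P_def N_def by (simp add: mult.commute)
    have h2: "27 * S^2 - 12 * (N^2 * S) + 2 * N^4 > 0"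
    proof -
      have "27 * S^2 - 12 * (N^2 * S) + 2 * N^4 = 27 * (S - 2 * N^2 / 9)^2 + 2 / 3 * N^4"
        by (simp add: algebra_simps power2_eq_square power4_eq_xxxx)
      moreover have "N^4 > 0" using Npos by simp
      moreover have "(S - 2 * N^2 / 9)^2 \<ge> 0" by simp
      ultimately show ?thesis by linarith
    qed
    have e1: "9 * N * (2 * N * S - 3 * P) = 18 * (N^2 * S) - 27 * (N * P)"
      by (simp add: algebra_simps power2_eq_square)
    have e2: "9 * N * (c * (3 * S + N * N)) = 6 * (N^2 * S) + 2 * N^4"
      unfolding c_def by (simp add: algebra_simps power2_eq_square power4_eq_xxxx)
    have "9 * N * (2 * N * S - 3 * P) < 9 * N * (c * (3 * S + N * N))"
      using e1 e2 h1 h2 by linarith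
    then have lt: "2 * N * S - 3 * P < c * (3 * S + N * N)"
      using Npos by (simp add: mult_less_cancel_left_pos)
    have "\<exists>v. X v \<bullet> (Q *v X v) < c * (X v \<bullet> X v)"
    proof (rule ccontr)
      assume "\<not> ?thesis"
      then have "\<forall>v. c * (X v \<bullet> X v) \<le> X v \<bullet> (Q *v X v)" by (simp add: not_less)
      then have "(\<Sum>v\<in>UNIV. c * (X v \<bullet> X v)) \<le> (\<Sum>v\<in>UNIV. X v \<bullet> (Q *v X v))"
        by (intro sum_mono) auto
      then show False using lt sumnum sumden by (simp add: sum_distrib_left[symmetric])
    qed
    then obtain v where v: "X v \<bullet> (Q *v X v) < c * (X v \<bullet> X v)" by blast
    have "X v \<bullet> X v > 0" using den[of v] dnn[of v] Npos by simp
    then have "X v \<noteq> 0" by auto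
    then show ?thesis using v unfolding Q_def c_def N_def by blast
  qed
qed


theorem corollary3:
  fixes E :: "'n::finite \<Rightarrow> 'n \<Rightarrow> bool"
  assumes "simple_graph E" and "triangle_free E"
  shows "smallest_eigenvalue (signless_laplacian E) < 2 * real CARD('n) / 9"
proof -
  let ?Q = "signless_laplacian E"
  have sym: "transpose ?Q = ?Q" using main_graph(2)[OF assms] .
  obtain x where x: "x \<noteq> 0" "x \<bullet> (?Q *v x) < (2 * real CARD('n) / 9) * (x \<bullet> x)"
    using main_graph(1)[OF assms] by blast
  obtain m where m: "m \<in> eigenvalues ?Q" "\<forall>y. m * (y \<bullet> y) \<le> y \<bullet> (?Q *v y)"
    using min_eigen[OF sym] by blast
  have xx: "x \<bullet> x > 0" using x(1) by simp
  have "m * (x \<bullet> x) < (2 * real CARD('n) / 9) * (x \<bullet> x)" using m(2) x(2) by (meson le_less_trans)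
  then have "m < 2 * real CARD('n) / 9" using xx by (simp add: mult_less_cancel_right_pos)
  moreover have "smallest_eigenvalue ?Q \<le> m"
    unfolding smallest_eigenvalue_def using m(1) eig_finite[OF sym] by (rule Min_le[rotated])
  ultimately show ?thesis by linarith
qed

end
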